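(* Let $X$ be an order continuous rearrangement invariant space with the Fatou property and let $F$ be an Orlicz function. Suppose that the Cesàro operator $C$ is bounded on the Calderón–Lozanovskiĭ space $X_F$. If the Cesàro space $C(X_F)$ contains a lattice isometric copy of $\ell_\infty$, then $X_F$ also contains a lattice isometric copy of $\ell_\infty$.
   Context: Rearrangement invariant spaces are on $(0,1)$, $(0,\infty)$ (Lebesgue measure) or $\mathbb N$ (counting measure): Banach spaces $X\subset L_0$ with the ideal property ($|f|\le|g|$, $g\in X$ imply $f\in X$, $\|f\|_X\le\|g\|_X$), containing an a.e. positive element, with equal norms for equimeasurable elements. Order continuous: for every $f\in X$, $0\le f_n\le|f|$, $f_n\downarrow0$ a.e. imply $\|f_n\|_X\to0$. Fatou property: $0\le f_n\uparrow f$, $\sup\|f_n\|_X<\infty$ imply $f\in X$ and $\|f_n\|_X\uparrow\|f\|_X$. An Orlicz function is a non-decreasing convex $F:[0,\infty)\to[0,\infty]$ with $F(0)=0$; $X_F=\{f:\|f\|_{X_F}<\infty\}$ with $\|f\|_{X_F}=\inf\{\lambda>0:\|F(|f|/\lambda)\|_X\le1\}$. The Cesàro operator is $C(f)(x)=\frac1x\int_0^x|f|$ (function case) or $C(x)_n=\frac1n\sum_{k=1}^nx_k$ (sequence case), and $C(X_F)=\{f:C(|f|)\in X_F\}$ with norm $\|C(|f|)\|_{X_F}$. A lattice isometric copy of $\ell_\infty$ is the image of a linear isometric lattice-homomorphic embedding of $\ell_\infty$. *)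

theory Defs
  imports "HOL-Analysis.Analysis"
begin

text \<open>A function norm rho on L_0(M) with values in [0,\<infinity>]; the space X is
  the set of measurable f with rho f < \<infinity>, and rho restricted to X is the norm of X.\<close>

definition in_space :: "'a measure \<Rightarrow> (('a \<Rightarrow> real) \<Rightarrow> ennreal) \<Rightarrow> ('a \<Rightarrow> real) \<Rightarrow> bool" where
  "in_space M \<rho> f \<longleftrightarrow> f \<in> borel_measurable M \<and> \<rho> f < \<infinity>"

definition equimeasurable :: "'a measure \<Rightarrow> ('a \<Rightarrow> real) \<Rightarrow> ('a \<Rightarrow> real) \<Rightarrow> bool" where
  "equimeasurable M f g \<longleftrightarrow>
     (\<forall>t::real. emeasure M {x \<in> space M. t < \<bar>f x\<bar>} = emeasure M {x \<in> space M. t < \<bar>g x\<bar>})"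

definition ri_space :: "'a measure \<Rightarrow> (('a \<Rightarrow> real) \<Rightarrow> ennreal) \<Rightarrow> bool" where
  "ri_space M \<rho> \<longleftrightarrow>
     \<comment> \<open>norm axioms\<close>
     (\<forall>f \<in> borel_measurable M. \<rho> f = 0 \<longleftrightarrow> (AE x in M. f x = 0)) \<and>
     (\<forall>f \<in> borel_measurable M. \<forall>c::real. \<rho> (\<lambda>x. c * f x) = ennreal \<bar>c\<bar> * \<rho> f) \<and>
     (\<forall>f \<in> borel_measurable M. \<forall>g \<in> borel_measurable M. \<rho> (\<lambda>x. f x + g x) \<le> \<rho> f + \<rho> g) \<and>
     \<comment> \<open>completeness (Banach space)\<close>
     (\<forall>u :: nat \<Rightarrow> 'a \<Rightarrow> real. (\<forall>n. in_space M \<rho> (u n)) \<and>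
        (\<forall>e>0. \<exists>N. \<forall>m\<ge>N. \<forall>n\<ge>N. \<rho> (\<lambda>x. u m x - u n x) < ennreal e) \<longrightarrow>
        (\<exists>f. in_space M \<rho> f \<and> (\<lambda>n. \<rho> (\<lambda>x. u n x - f x)) \<longlonglongrightarrow> 0)) \<and>
     \<comment> \<open>ideal property\<close>
     (\<forall>f \<in> borel_measurable M. \<forall>g \<in> borel_measurable M.
        (AE x in M. \<bar>f x\<bar> \<le> \<bar>g x\<bar>) \<longrightarrow> \<rho> f \<le> \<rho> g) \<and>
     \<comment> \<open>contains an a.e. positive element\<close>
     (\<exists>f. in_space M \<rho> f \<and> (AE x in M. 0 < f x)) \<and>
     \<comment> \<open>rearrangement invariance\<close>
     (\<forall>f \<in> borel_measurable M. \<forall>g \<in> borel_measurable M.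
        equimeasurable M f g \<longrightarrow> \<rho> f = \<rho> g)"

definition order_continuous :: "'a measure \<Rightarrow> (('a \<Rightarrow> real) \<Rightarrow> ennreal) \<Rightarrow> bool" where
  "order_continuous M \<rho> \<longleftrightarrow>
     (\<forall>f (u :: nat \<Rightarrow> 'a \<Rightarrow> real). in_space M \<rho> f \<and> (\<forall>n. u n \<in> borel_measurable M) \<and>
        (AE x in M. \<forall>n. 0 \<le> u n x \<and> u n x \<le> \<bar>f x\<bar> \<and> u (Suc n) x \<le> u n x) \<and>
        (AE x in M. (\<lambda>n. u n x) \<longlonglongrightarrow> 0)
        \<longrightarrow> (\<lambda>n. \<rho> (u n)) \<longlonglongrightarrow> 0)"

definition fatou_property :: "'a measure \<Rightarrow> (('a \<Rightarrow> real) \<Rightarrow> ennreal) \<Rightarrow> bool" where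
  "fatou_property M \<rho> \<longleftrightarrow>
     (\<forall>f (u :: nat \<Rightarrow> 'a \<Rightarrow> real). f \<in> borel_measurable M \<and> (\<forall>n. u n \<in> borel_measurable M) \<and>
        (AE x in M. \<forall>n. 0 \<le> u n x \<and> u n x \<le> u (Suc n) x) \<and>
        (AE x in M. (\<lambda>n. u n x) \<longlonglongrightarrow> f x) \<and>
        (SUP n. \<rho> (u n)) < \<infinity>
        \<longrightarrow> \<rho> f < \<infinity> \<and> incseq (\<lambda>n. \<rho> (u n)) \<and> (\<lambda>n. \<rho> (u n)) \<longlonglongrightarrow> \<rho> f)"

text \<open>Orlicz function F : [0,\<infinity>) \<rightarrow> [0,\<infinity>] (values on negative reals are irrelevant).\<close>
definition orlicz :: "(real \<Rightarrow> ennreal) \<Rightarrow> bool" where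
  "orlicz F \<longleftrightarrow> F 0 = 0 \<and>
     (\<forall>x y. 0 \<le> x \<longrightarrow> x \<le> y \<longrightarrow> F x \<le> F y) \<and>
     (\<forall>x y t. 0 \<le> x \<longrightarrow> 0 \<le> y \<longrightarrow> 0 \<le> t \<longrightarrow> t \<le> 1 \<longrightarrow>
        F ((1 - t) * x + t * y) \<le> ennreal (1 - t) * F x + ennreal t * F y)"

definition ennfun_norm :: "'a measure \<Rightarrow> (('a \<Rightarrow> real) \<Rightarrow> ennreal) \<Rightarrow> ('a \<Rightarrow> ennreal) \<Rightarrow> ennreal" where
  "ennfun_norm M \<rho> g = (if AE x in M. g x \<noteq> \<infinity> then \<rho> (\<lambda>x. enn2real (g x)) else \<infinity>)"

definition CL_norm :: "'a measure \<Rightarrow> (('a \<Rightarrow> real) \<Rightarrow> ennreal) \<Rightarrow> (real \<Rightarrow> ennreal) \<Rightarrow> ('a \<Rightarrow> real) \<Rightarrow> ennreal" where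
  "CL_norm M \<rho> F f = Inf {ennreal l | l. 0 < l \<and> ennfun_norm M \<rho> (\<lambda>x. F (\<bar>f x\<bar> / l)) \<le> 1}"

definition cesaro_fun :: "(real \<Rightarrow> real) \<Rightarrow> real \<Rightarrow> ennreal" where
  "cesaro_fun f x = (\<integral>\<^sup>+ t. ennreal \<bar>f t\<bar> * indicator {0<..x} t \<partial>lebesgue) / ennreal x"

text \<open>Cesaro operator applied to |x|, sequence case (index n here stands for n+1).\<close>
definition cesaro_seq :: "(nat \<Rightarrow> real) \<Rightarrow> nat \<Rightarrow> ennreal" where
  "cesaro_seq f n = ennreal ((\<Sum>k\<le>n. \<bar>f k\<bar>) / real (Suc n))"

definition cesaro_bounded ::
  "'a measure \<Rightarrow> (('a \<Rightarrow> real) \<Rightarrow> 'a \<Rightarrow> ennreal) \<Rightarrow> (('a \<Rightarrow> real) \<Rightarrow> ennreal) \<Rightarrow> bool" where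
  "cesaro_bounded M Ces N \<longleftrightarrow>
     (\<exists>K::real. \<forall>f. in_space M N f \<longrightarrow> ennfun_norm M N (Ces f) \<le> ennreal K * N f)"

definition cesaro_norm ::
  "'a measure \<Rightarrow> (('a \<Rightarrow> real) \<Rightarrow> 'a \<Rightarrow> ennreal) \<Rightarrow> (('a \<Rightarrow> real) \<Rightarrow> ennreal) \<Rightarrow> ('a \<Rightarrow> real) \<Rightarrow> ennreal" where
  "cesaro_norm M Ces N f = ennfun_norm M N (Ces f)"

text \<open>The space {f measurable. N f < \<infinity>} (pointwise a.e. order) contains a lattice
  isometric copy of l_\<infinity>: a linear, lattice homomorphic, isometric map from l_\<infinity>.\<close>
definition lattice_iso_linfty :: "'a measure \<Rightarrow> (('a \<Rightarrow> real) \<Rightarrow> ennreal) \<Rightarrow> bool" where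
  "lattice_iso_linfty M N \<longleftrightarrow>
     (\<exists>T :: (nat \<Rightarrow> real) \<Rightarrow> 'a \<Rightarrow> real.
        (\<forall>a. bounded (range a) \<longrightarrow>
           T a \<in> borel_measurable M \<and> N (T a) = ennreal (SUP n. \<bar>a n\<bar>)) \<and>
        (\<forall>a b. bounded (range a) \<longrightarrow> bounded (range b) \<longrightarrow>
           (AE x in M. T (\<lambda>n. a n + b n) x = T a x + T b x)) \<and>
        (\<forall>a c. bounded (range a) \<longrightarrow> (AE x in M. T (\<lambda>n. c * a n) x = c * T a x)) \<and>
        (\<forall>a b. bounded (range a) \<longrightarrow> bounded (range b) \<longrightarrow>
           (AE x in M. T (\<lambda>n. max (a n) (b n)) x = max (T a x) (T b x))))"

end

theory Submission
  imports Defs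
begin

lemma mono_comp_measurable:
  fixes h :: "real \<Rightarrow> ennreal"
  assumes mono: "\<And>s t. 0 \<le> s \<Longrightarrow> s \<le> t \<Longrightarrow> h s \<le> h t"
    and p: "p \<in> borel_measurable M" and nn: "\<And>x. x \<in> space M \<Longrightarrow> 0 \<le> p x"
  shows "(\<lambda>x. h (p x)) \<in> borel_measurable M"
proof (rule borel_measurableI_less)
  fix y
  define D where "D = {t. 0 \<le> t \<and> h t < y}"
  have down: "\<And>s t. 0 \<le> s \<Longrightarrow> s \<le> t \<Longrightarrow> t \<in> D \<Longrightarrow> s \<in> D"
    unfolding D_def using mono by (fastforce intro: le_less_trans)
  have eq: "{x\<in>space M. h (p x) < y} = {x\<in>space M. p x \<in> D}"
    using nn by (auto simp: D_def)
  show "{x\<in>space M. h (p x) < y} \<in> sets M"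
  proof (cases "D = {}")
    case True then show ?thesis unfolding eq by simp
  next
    case ne: False
    show ?thesis
    proof (cases "bdd_above D")
      case False
      have "{x\<in>space M. p x \<in> D} = space M"
      proof safe
        fix x assume x: "x \<in> space M"
        from False obtain t where "t \<in> D" "p x < t" unfolding bdd_above_def by (meson not_le)
        then show "p x \<in> D" using down nn[OF x] by (meson less_imp_le)
      qed
      then show ?thesis unfolding eq by simp
    next
      case True
      define s where "s = Sup D"
      have eq2: "{x\<in>space M. p x \<in> D} = {x\<in>space M. p x < s} \<union> {x\<in>space M. p x = s \<and> s \<in> D}"
      proof safe
        fix x assume "x \<in> space M" "p x \<in> D" "\<not> p x < s"
        moreover have "p x \<le> s" using \<open>p x \<in> D\<close> True unfolding s_def by (simp add: cSup_upper)
        ultimately show "p x = s" by simp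
        then show "s \<in> D" using \<open>p x \<in> D\<close> by simp
      next
        fix x assume x: "x \<in> space M" "p x < s"
        then obtain t where "t \<in> D" "p x < t" unfolding s_def using ne by (meson less_cSup_iff True)
        then show "p x \<in> D" using down nn[OF x(1)] by (meson less_imp_le)
      qed
      show ?thesis unfolding eq eq2 using p by measurable
    qed
  qed
qed

lemma ennfun_mono_gen:
  assumes N_mono: "\<And>f g. f \<in> borel_measurable M \<Longrightarrow> g \<in> borel_measurable M \<Longrightarrow>
       (AE x in M. \<bar>f x\<bar> \<le> \<bar>g x\<bar>) \<Longrightarrow> N f \<le> N g"
    and a: "a \<in> borel_measurable M" and b: "b \<in> borel_measurable M"
    and ab: "AE x in M. a x \<le> b x"
  shows "ennfun_norm M N a \<le> ennfun_norm M N b"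
proof (cases "AE x in M. b x \<noteq> \<infinity>")
  case True
  then have A: "AE x in M. a x \<noteq> \<infinity>" using ab by eventually_elim (auto simp: top_unique)
  have "N (\<lambda>x. enn2real (a x)) \<le> N (\<lambda>x. enn2real (b x))"
    apply (rule N_mono)
    using a b apply measurable
    using True ab by eventually_elim (auto intro!: enn2real_mono simp: less_top)
  then show ?thesis using True A by (simp add: ennfun_norm_def)
next
  case False
  then show ?thesis by (simp add: ennfun_norm_def)
qed

definition modu :: "'a measure \<Rightarrow> (('a \<Rightarrow> real) \<Rightarrow> ennreal) \<Rightarrow> (real \<Rightarrow> ennreal) \<Rightarrow> ('a \<Rightarrow> real) \<Rightarrow> real \<Rightarrow> ennreal" where
  "modu M \<rho> F f l = ennfun_norm M \<rho> (\<lambda>x. F (\<bar>f x\<bar> / l))"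

lemma CL_alt: "CL_norm M \<rho> F f = Inf {ennreal l | l. 0 < l \<and> modu M \<rho> F f l \<le> 1}"
  by (simp add: CL_norm_def modu_def)

context
  fixes M :: "'a measure" and \<rho> :: "('a \<Rightarrow> real) \<Rightarrow> ennreal" and F :: "real \<Rightarrow> ennreal"
  assumes ri: "ri_space M \<rho>" and orl: "orlicz F"
begin

lemma ri_ideal: "f \<in> borel_measurable M \<Longrightarrow> g \<in> borel_measurable M \<Longrightarrow>
       (AE x in M. \<bar>f x\<bar> \<le> \<bar>g x\<bar>) \<Longrightarrow> \<rho> f \<le> \<rho> g"
  using ri unfolding ri_space_def by blast

lemma ri_tri: "f \<in> borel_measurable M \<Longrightarrow> g \<in> borel_measurable M \<Longrightarrow>
       \<rho> (\<lambda>x. f x + g x) \<le> \<rho> f + \<rho> g"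
  using ri unfolding ri_space_def by blast

lemma ri_zero: "\<rho> (\<lambda>x. 0) = 0"
  using ri unfolding ri_space_def by auto

lemma F0: "F 0 = 0" using orl by (simp add: orlicz_def)

lemma F_mono: "0 \<le> s \<Longrightarrow> s \<le> t \<Longrightarrow> F s \<le> F t"
  using orl by (simp add: orlicz_def)

lemma F_meas: "p \<in> borel_measurable N \<Longrightarrow> (\<And>x. x \<in> space N \<Longrightarrow> 0 \<le> p x) \<Longrightarrow>
   (\<lambda>x. F (p x)) \<in> borel_measurable N"
  by (rule mono_comp_measurable[OF F_mono])

lemma F_conv:
  assumes "0 \<le> t" "t \<le> s" "0 < s"
  shows "F t \<le> ennreal (t / s) * F s"
proof -
  have H: "\<And>x y \<tau>. 0 \<le> x \<Longrightarrow> 0 \<le> y \<Longrightarrow> 0 \<le> \<tau> \<Longrightarrow> \<tau> \<le> 1 \<Longrightarrow>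
      F ((1 - \<tau>) * x + \<tau> * y) \<le> ennreal (1 - \<tau>) * F x + ennreal \<tau> * F y"
    using orl unfolding orlicz_def by blast
  have "F ((1 - t/s) * 0 + (t/s) * s) \<le> ennreal (1 - t/s) * F 0 + ennreal (t/s) * F s"
    by (rule H) (use assms in auto)
  then show ?thesis using assms by (simp add: F0)
qed

lemma ennfun_mono:
  "a \<in> borel_measurable M \<Longrightarrow> b \<in> borel_measurable M \<Longrightarrow> (AE x in M. a x \<le> b x) \<Longrightarrow>
   ennfun_norm M \<rho> a \<le> ennfun_norm M \<rho> b"
  by (rule ennfun_mono_gen[OF ri_ideal])

lemma ennfun_add:
  assumes a: "a \<in> borel_measurable M" and b: "b \<in> borel_measurable M"
  shows "ennfun_norm M \<rho> (\<lambda>x. a x + b x) \<le> ennfun_norm M \<rho> a + ennfun_norm M \<rho> b"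
proof (cases "(AE x in M. a x \<noteq> \<infinity>) \<and> (AE x in M. b x \<noteq> \<infinity>)")
  case True
  then have A: "AE x in M. a x \<noteq> \<infinity>" and B: "AE x in M. b x \<noteq> \<infinity>" by auto
  have AB: "AE x in M. a x + b x \<noteq> \<infinity>" using A B by eventually_elim auto
  have "\<rho> (\<lambda>x. enn2real (a x + b x)) \<le> \<rho> (\<lambda>x. enn2real (a x) + enn2real (b x))"
    apply (rule ri_ideal)
    using a b apply measurable
    using A B by eventually_elim (simp add: enn2real_plus less_top)
  also have "\<dots> \<le> \<rho> (\<lambda>x. enn2real (a x)) + \<rho> (\<lambda>x. enn2real (b x))"
    by (rule ri_tri) (use a b in measurable)
  finally show ?thesis using A B AB by (simp add: ennfun_norm_def)
next
  case False
  then show ?thesis by (auto simp: ennfun_norm_def)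
qed

lemma modu_mono:
  assumes f: "f \<in> borel_measurable M" and g: "g \<in> borel_measurable M"
    and l: "0 < l" "0 < l'"
    and le: "\<And>x. x \<in> space M \<Longrightarrow> \<bar>f x\<bar> / l \<le> \<bar>g x\<bar> / l'"
  shows "modu M \<rho> F f l \<le> modu M \<rho> F g l'"
  unfolding modu_def
proof (rule ennfun_mono)
  show "(\<lambda>x. F (\<bar>f x\<bar> / l)) \<in> borel_measurable M"
    by (rule F_meas) (use f l in auto)
  show "(\<lambda>x. F (\<bar>g x\<bar> / l')) \<in> borel_measurable M"
    by (rule F_meas) (use g l in auto)
  show "AE x in M. F (\<bar>f x\<bar> / l) \<le> F (\<bar>g x\<bar> / l')"
    using le l by (auto intro!: F_mono)
qed

lemma modu_zero: "modu M \<rho> F (\<lambda>x. 0) l = 0"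
  by (simp add: modu_def ennfun_norm_def F0 ri_zero)

lemma CL_mono:
  assumes f: "f \<in> borel_measurable M" and g: "g \<in> borel_measurable M"
    and le: "AE x in M. \<bar>f x\<bar> \<le> \<bar>g x\<bar>"
  shows "CL_norm M \<rho> F f \<le> CL_norm M \<rho> F g"
  unfolding CL_alt
proof (rule Inf_superset_mono, safe)
  fix l assume l: "0 < l" "modu M \<rho> F g l \<le> 1"
  have "modu M \<rho> F f l \<le> modu M \<rho> F g l"
    unfolding modu_def
  proof (rule ennfun_mono)
    show "(\<lambda>x. F (\<bar>f x\<bar> / l)) \<in> borel_measurable M"
      by (rule F_meas) (use f l in auto)
    show "(\<lambda>x. F (\<bar>g x\<bar> / l)) \<in> borel_measurable M"
      by (rule F_meas) (use g l in auto)
    show "AE x in M. F (\<bar>f x\<bar> / l) \<le> F (\<bar>g x\<bar> / l)"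
      using le by eventually_elim (use l in \<open>auto intro!: F_mono divide_right_mono\<close>)
  qed
  then show "\<exists>l'. ennreal l = ennreal l' \<and> 0 < l' \<and> modu M \<rho> F f l' \<le> 1"
    using l by auto
qed

lemma CL_cong:
  "f \<in> borel_measurable M \<Longrightarrow> g \<in> borel_measurable M \<Longrightarrow> (AE x in M. f x = g x) \<Longrightarrow>
   CL_norm M \<rho> F f = CL_norm M \<rho> F g"
  by (rule antisym; rule CL_mono) (auto elim: AE_mp)

lemma CL_le_modu:
  assumes f: "f \<in> borel_measurable M" and N: "CL_norm M \<rho> F f \<le> 1" and l: "1 < l"
  shows "modu M \<rho> F f l \<le> 1"
proof -
  have "Inf {ennreal l | l. 0 < l \<and> modu M \<rho> F f l \<le> 1} < ennreal l"
  proof -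
    have "(1::ennreal) < ennreal l" using l by simp
    then show ?thesis using N CL_alt[of M \<rho> F f] by (metis le_less_trans)
  qed
  then obtain l' where l': "0 < l'" "modu M \<rho> F f l' \<le> 1" "ennreal l' < ennreal l"
    unfolding Inf_less_iff by auto
  then have "l' < l" by (simp add: ennreal_less_iff)
  have "modu M \<rho> F f l \<le> modu M \<rho> F f l'"
    by (rule modu_mono[OF f f]) (use l l' \<open>l' < l\<close> in \<open>auto intro!: divide_left_mono\<close>)
  then show ?thesis using l' by simp
qed

lemma CL_ge:
  assumes "\<And>l. 0 < l \<Longrightarrow> l < c \<Longrightarrow> 1 < modu M \<rho> F f l"
  shows "ennreal c \<le> CL_norm M \<rho> F f"
  unfolding CL_alt
proof (rule Inf_greatest, safe)
  fix l assume "0 < l" "modu M \<rho> F f l \<le> 1"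
  then have "c \<le> l" using assms by (meson not_le)
  then show "ennreal c \<le> ennreal l" by (rule ennreal_leI)
qed

lemma CL_le:
  assumes "0 \<le> c" "\<And>l. c < l \<Longrightarrow> modu M \<rho> F f l \<le> 1"
  shows "CL_norm M \<rho> F f \<le> ennreal c"
proof (rule ennreal_le_epsilon)
  fix e :: real assume e: "0 < e"
  have "CL_norm M \<rho> F f \<le> ennreal (c + e)"
    unfolding CL_alt
    by (rule Inf_lower) (intro CollectI exI[of _ "c+e"], use assms e in auto)
  then show "CL_norm M \<rho> F f \<le> ennreal c + ennreal e"
    using assms e by (simp add: ennreal_plus)
qed

lemma CL_le_l: "0 < l \<Longrightarrow> modu M \<rho> F f l \<le> 1 \<Longrightarrow> CL_norm M \<rho> F f \<le> ennreal l"
  unfolding CL_alt by (rule Inf_lower) auto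

end


lemma ennfun_fin:
  assumes "ennfun_norm M \<rho> g \<noteq> \<infinity>"
  shows "AE x in M. g x \<noteq> \<infinity>" "ennfun_norm M \<rho> g = \<rho> (\<lambda>x. enn2real (g x))"
  using assms by (auto simp: ennfun_norm_def split: if_splits)

context
  fixes M :: "'a measure" and \<rho> :: "('a \<Rightarrow> real) \<Rightarrow> ennreal" and F :: "real \<Rightarrow> ennreal"
    and w :: "'a \<Rightarrow> real" and u :: "nat \<Rightarrow> 'a \<Rightarrow> real"
  assumes ri: "ri_space M \<rho>" and orl: "orlicz F"
    and oc: "order_continuous M \<rho>" and fat: "fatou_property M \<rho>"
    and wm[measurable]: "w \<in> borel_measurable M" and um[measurable]: "\<And>n. u n \<in> borel_measurable M"
    and u_nn: "\<And>n x. x \<in> space M \<Longrightarrow> 0 \<le> u n x"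
    and u_le: "\<And>n x. x \<in> space M \<Longrightarrow> u n x \<le> w x"
    and u_dec: "\<And>n x. x \<in> space M \<Longrightarrow> u (Suc n) x \<le> u n x"
    and u_lim: "\<And>x. x \<in> space M \<Longrightarrow> (\<lambda>n. u n x) \<longlonglongrightarrow> 0"
    and Nw: "CL_norm M \<rho> F w \<le> 1"
    and Nu: "\<And>n. 1 \<le> CL_norm M \<rho> F (u n)"
begin

lemma w_nn: "x \<in> space M \<Longrightarrow> 0 \<le> w x"
  using u_nn[of x 0] u_le[of x 0] by simp

lemma u_antimono: "x \<in> space M \<Longrightarrow> m \<le> n \<Longrightarrow> u n x \<le> u m x"
  using lift_Suc_antimono_le[of "\<lambda>n. u n x"] u_dec by blast

lemma Fm[measurable]: "p \<in> borel_measurable M \<Longrightarrow> (\<And>x. x \<in> space M \<Longrightarrow> 0 \<le> p x) \<Longrightarrow>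
   (\<lambda>x. F (p x)) \<in> borel_measurable M"
  by (rule F_meas[OF ri orl])

lemma oc_step:
  assumes l: "0 < l" "l < 1"
  shows "modu M \<rho> F (u k) l = \<infinity>"
proof (rule ccontr)
  assume fin: "modu M \<rho> F (u k) l \<noteq> \<infinity>"
  define h where "h = (\<lambda>x. enn2real (F (\<bar>u k x\<bar> / l)))"
  have Afin: "AE x in M. F (\<bar>u k x\<bar> / l) \<noteq> \<infinity>" and rh: "modu M \<rho> F (u k) l = \<rho> h"
    using ennfun_fin[OF fin[unfolded modu_def]] by (auto simp: modu_def h_def)
  have hm: "h \<in> borel_measurable M" unfolding h_def
    by (intro borel_measurable_enn2real Fm) (use l in auto)
  have hin: "in_space M \<rho> h" using hm fin rh by (simp add: in_space_def less_top)
  define v where "v = (\<lambda>n x. enn2real (F (\<bar>u (n+k) x\<bar> / l)))"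
  have vm: "\<And>n. v n \<in> borel_measurable M" unfolding v_def
    by (intro borel_measurable_enn2real Fm) (use l in auto)
  have Fle: "\<And>x n m. x \<in> space M \<Longrightarrow> m \<le> n \<Longrightarrow> F (\<bar>u n x\<bar> / l) \<le> F (\<bar>u m x\<bar> / l)"
    using l u_antimono u_nn by (auto intro!: F_mono[OF ri orl] divide_right_mono)
  have A1: "AE x in M. \<forall>n. 0 \<le> v n x \<and> v n x \<le> \<bar>h x\<bar> \<and> v (Suc n) x \<le> v n x"
    using AE_space Afin
  proof (eventually_elim)
    case (elim x)
    show ?case
    proof (intro allI conjI)
      fix n
      show "0 \<le> v n x" by (simp add: v_def)
      have "F (\<bar>u (n+k) x\<bar> / l) \<le> F (\<bar>u k x\<bar> / l)" using Fle[OF elim(1), of k "n+k"] by simp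
      then show "v n x \<le> \<bar>h x\<bar>" unfolding v_def h_def using elim(2)
        by (simp add: enn2real_mono less_top)
      have "F (\<bar>u (Suc n+k) x\<bar> / l) \<le> F (\<bar>u (n+k) x\<bar> / l)" using Fle[OF elim(1), of "n+k" "Suc n+k"] by simp
      moreover have "F (\<bar>u (n+k) x\<bar> / l) < \<infinity>"
        using Fle[OF elim(1), of k "n+k"] elim(2) by (simp add: le_less_trans less_top)
      ultimately show "v (Suc n) x \<le> v n x" unfolding v_def by (simp add: enn2real_mono)
    qed
  qed
  have A2: "AE x in M. (\<lambda>n. v n x) \<longlonglongrightarrow> 0"
    using AE_space Afin
  proof (eventually_elim)
    case (elim x)
    define s where "s = \<bar>u k x\<bar> / l"
    have s0: "0 \<le> s" using l by (simp add: s_def)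
    show ?case
    proof (cases "s = 0")
      case True
      then have "u k x = 0" using l by (simp add: s_def)
      then have "\<And>n. u (n+k) x = 0" using u_antimono[OF elim(1), of k] u_nn[OF elim(1)]
        by (metis le_add2 order_antisym)
      then show ?thesis by (simp add: v_def F0[OF ri orl])
    next
      case False
      then have sp: "0 < s" using s0 by simp
      have bnd: "v n x \<le> (\<bar>u (n+k) x\<bar> / l / s) * enn2real (F s)" for n
      proof -
        have t0: "0 \<le> \<bar>u (n+k) x\<bar> / l" using l by simp
        have ts: "\<bar>u (n+k) x\<bar> / l \<le> s" unfolding s_def
          using u_antimono[OF elim(1), of k "n+k"] u_nn[OF elim(1)] l by (auto intro!: divide_right_mono)
        have "F (\<bar>u (n+k) x\<bar> / l) \<le> ennreal (\<bar>u (n+k) x\<bar> / l / s) * F s"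
          by (rule F_conv[OF ri orl t0 ts sp])
        moreover have "F s < \<infinity>" using elim(2) by (simp add: s_def less_top)
        ultimately have "enn2real (F (\<bar>u (n+k) x\<bar> / l)) \<le> enn2real (ennreal (\<bar>u (n+k) x\<bar> / l / s) * F s)"
          by (intro enn2real_mono) (auto simp: ennreal_mult_less_top)
        also have "\<dots> = (\<bar>u (n+k) x\<bar> / l / s) * enn2real (F s)"
          using t0 sp l by (simp add: enn2real_mult)
        finally show ?thesis by (simp add: v_def)
      qed
      have "(\<lambda>n. u (n+k) x) \<longlonglongrightarrow> 0" using u_lim[OF elim(1)] by (rule LIMSEQ_ignore_initial_segment[where k=k, simplified])
      then have "(\<lambda>n. (\<bar>u (n+k) x\<bar> / l / s) * enn2real (F s)) \<longlonglongrightarrow> (\<bar>0\<bar> / l / s) * enn2real (F s)"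
        using l sp by (intro tendsto_intros) auto
      then have "(\<lambda>n. (\<bar>u (n+k) x\<bar> / l / s) * enn2real (F s)) \<longlonglongrightarrow> 0" by simp
      note lim = this
      have e1: "eventually (\<lambda>n. 0 \<le> v n x) sequentially" by (simp add: v_def)
      have e2: "eventually (\<lambda>n. v n x \<le> (\<bar>u (n+k) x\<bar> / l / s) * enn2real (F s)) sequentially"
        using bnd by simp
      show ?thesis
        by (rule tendsto_sandwich[OF e1 e2 tendsto_const lim])
    qed
  qed
  have "(\<lambda>n. \<rho> (v n)) \<longlonglongrightarrow> 0"
    using oc hin vm A1 A2 unfolding order_continuous_def by blast
  then have "eventually (\<lambda>n. \<rho> (v n) < 1) sequentially"
    by (rule order_tendstoD) simp
  then obtain n where n: "\<rho> (v n) < 1" by (auto simp: eventually_sequentially)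
  have Afin2: "AE x in M. F (\<bar>u (n+k) x\<bar> / l) \<noteq> \<infinity>"
    using AE_space Afin
  proof eventually_elim
    case (elim x)
    have "F (\<bar>u (n+k) x\<bar> / l) \<le> F (\<bar>u k x\<bar> / l)" by (rule Fle[OF elim(1)]) simp
    then show ?case using elim(2) by (auto simp: top_unique)
  qed
  have "modu M \<rho> F (u (n+k)) l = \<rho> (v n)"
    using Afin2 by (simp add: modu_def ennfun_norm_def v_def)
  then have "CL_norm M \<rho> F (u (n+k)) \<le> ennreal l"
    using n l by (intro CL_le_l[OF ri orl]) auto
  also have "\<dots> < 1" using l by simp
  finally show False using Nu[of "n+k"] by simp
qed

definition E :: "nat \<Rightarrow> 'a set" where "E n = {x\<in>space M. w x / 3 < u n x}"

lemma E_sets: "E n \<in> sets M" unfolding E_def by measurable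

lemma E_space: "E n \<subseteq> space M" unfolding E_def by auto

lemma E_dec: assumes mn: "m \<le> n" shows "E n \<subseteq> E m"
proof
  fix x assume "x \<in> E n"
  then show "x \<in> E m" using u_antimono[of x m n] mn unfolding E_def by auto
qed

lemma E_empty:
  assumes x: "x \<in> space M" shows "\<exists>n. x \<notin> E n"
proof (rule ccontr)
  assume "\<not> ?thesis"
  then have all: "\<And>n. w x / 3 < u n x" unfolding E_def by auto
  have "0 < w x" using all[of 0] u_le[OF x, of 0] w_nn[OF x] by linarith
  have "w x / 3 \<le> 0"
    by (rule tendsto_lowerbound[OF u_lim[OF x]]) (use all in \<open>auto intro!: always_eventually less_imp_le\<close>)
  with \<open>0 < w x\<close> show False by simp
qed

lemma If_meas[measurable]: "S \<in> sets M \<Longrightarrow> f \<in> borel_measurable M \<Longrightarrow> g \<in> borel_measurable M \<Longrightarrow>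
   (\<lambda>x. if x \<in> S then f x else g x) \<in> borel_measurable M"
  by (rule measurable_If_set) auto

lemma split_step:
  assumes l: "1/3 < l" "l < 1"
  shows "modu M \<rho> F (\<lambda>x. if x \<in> E n then w x else 0) l = \<infinity>"
proof (rule ccontr)
  assume fin: "modu M \<rho> F (\<lambda>x. if x \<in> E n then w x else 0) l \<noteq> \<infinity>"
  have l0: "0 < l" using l by simp
  define a1 where "a1 = (\<lambda>x. if x \<in> E n then u n x else 0)"
  define a2 where "a2 = (\<lambda>x. if x \<in> E n then 0 else u n x)"
  have a1m: "a1 \<in> borel_measurable M" and a2m: "a2 \<in> borel_measurable M"
    unfolding a1_def a2_def using E_sets by measurable
  have F1m: "(\<lambda>x. F (\<bar>a1 x\<bar> / l)) \<in> borel_measurable M"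
    by (rule Fm) (use a1m l0 in auto)
  have F2m: "(\<lambda>x. F (\<bar>a2 x\<bar> / l)) \<in> borel_measurable M"
    by (rule Fm) (use a2m l0 in auto)
  have eq: "(\<lambda>x. F (\<bar>u n x\<bar> / l)) = (\<lambda>x. F (\<bar>a1 x\<bar> / l) + F (\<bar>a2 x\<bar> / l))"
    by (auto simp: a1_def a2_def F0[OF ri orl])
  have "modu M \<rho> F (u n) l \<le> modu M \<rho> F a1 l + modu M \<rho> F a2 l"
    unfolding modu_def eq by (rule ennfun_add[OF ri orl F1m F2m])
  also have "modu M \<rho> F a1 l \<le> modu M \<rho> F (\<lambda>x. if x \<in> E n then w x else 0) l"
    by (rule modu_mono[OF ri orl a1m _ l0 l0]) (use E_sets u_le u_nn l0 in \<open>auto simp: a1_def intro!: divide_right_mono abs_of_nonneg order.trans[OF _ abs_ge_self]\<close>)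
  also have "modu M \<rho> F a2 l \<le> modu M \<rho> F w (3 * l)"
  proof (rule modu_mono[OF ri orl a2m wm l0])
    show "0 < 3 * l" using l0 by simp
    fix x assume x: "x \<in> space M"
    show "\<bar>a2 x\<bar> / l \<le> \<bar>w x\<bar> / (3 * l)"
    proof (cases "x \<in> E n")
      case False
      then have "u n x \<le> w x / 3" using x unfolding E_def by auto
      then show ?thesis using False u_nn[OF x] w_nn[OF x] l0
        by (auto simp: a2_def field_simps)
    qed (use w_nn[OF x] l0 in \<open>auto simp: a2_def\<close>)
  qed
  also have "\<dots> \<le> 1" by (rule CL_le_modu[OF ri orl wm Nw]) (use l in auto)
  finally have "modu M \<rho> F (u n) l \<le> modu M \<rho> F (\<lambda>x. if x \<in> E n then w x else 0) l + 1"
    by simp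
  then have "modu M \<rho> F (u n) l \<noteq> \<infinity>" using fin by (auto simp: top_unique ennreal_add_eq_top)
  then show False using oc_step[of l n] l by simp
qed

lemma fatou_step:
  assumes l: "1/3 < l" "l < 1"
  shows "\<exists>J'. J < J' \<and> 1 < modu M \<rho> F (\<lambda>x. if x \<in> E J - E J' then w x else 0) l"
proof (rule ccontr)
  assume "\<not> ?thesis"
  then have le1: "\<And>J'. J < J' \<Longrightarrow> modu M \<rho> F (\<lambda>x. if x \<in> E J - E J' then w x else 0) l \<le> 1"
    using not_less by blast
  have l0: "0 < l" using l by simp
  define h where "h = (\<lambda>j x. if x \<in> E J - E (J + Suc j) then w x else 0)"
  define g where "g = (\<lambda>x. if x \<in> E J then w x else 0)"
  have Ediff: "E J - E j \<in> sets M" for j using E_sets by auto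
  have hm: "h j \<in> borel_measurable M" for j unfolding h_def by (rule If_meas[OF Ediff]) auto
  have gm: "g \<in> borel_measurable M" unfolding g_def by (rule If_meas[OF E_sets]) auto
  have hle: "modu M \<rho> F (h j) l \<le> 1" for j unfolding h_def by (rule le1) simp
  then have hfin: "modu M \<rho> F (h j) l \<noteq> \<infinity>" for j using hle[of j] by (metis ennreal_one_neq_top neq_top_trans infinity_ennreal_def)
  define v where "v = (\<lambda>j x. enn2real (F (\<bar>h j x\<bar> / l)))"
  define f where "f = (\<lambda>x. enn2real (F (\<bar>g x\<bar> / l)))"
  have hA: "AE x in M. F (\<bar>h j x\<bar> / l) \<noteq> \<infinity>" and hv: "modu M \<rho> F (h j) l = \<rho> (v j)" for j
    using ennfun_fin[OF hfin[of j, unfolded modu_def]] by (auto simp: modu_def v_def)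
  have hAll: "AE x in M. \<forall>j. F (\<bar>h j x\<bar> / l) \<noteq> \<infinity>"
    using hA by (simp add: AE_all_countable)
  have ev: "eventually (\<lambda>j. h j x = g x) sequentially" if x: "x \<in> space M" for x
  proof (cases "x \<in> E J")
    case True
    obtain n where n: "x \<notin> E n" using E_empty[OF x] by blast
    have "h j x = g x" if "n \<le> j" for j
    proof -
      have "x \<notin> E (J + Suc j)" using n E_dec[of n "J + Suc j"] that by auto
      then show ?thesis using True by (simp add: h_def g_def)
    qed
    then show ?thesis by (auto simp: eventually_sequentially)
  next
    case False
    then show ?thesis by (simp add: h_def g_def)
  qed
  have gA: "AE x in M. F (\<bar>g x\<bar> / l) \<noteq> \<infinity>"
    using AE_space hAll
  proof eventually_elim
    case (elim x)
    from ev[OF elim(1)] obtain j where "h j x = g x" by (auto simp: eventually_sequentially)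
    then show ?case using elim(2) by metis
  qed
  have vm: "v j \<in> borel_measurable M" for j unfolding v_def
    by (intro borel_measurable_enn2real Fm) (use hm l0 in auto)
  have fm: "f \<in> borel_measurable M" unfolding f_def
    by (intro borel_measurable_enn2real Fm) (use gm l0 in auto)
  have hmono: "\<bar>h j x\<bar> \<le> \<bar>h (Suc j) x\<bar>" if x: "x \<in> space M" for j x
  proof -
    have "E (J + Suc (Suc j)) \<subseteq> E (J + Suc j)" by (rule E_dec) simp
    then show ?thesis using w_nn[OF x] by (auto simp: h_def)
  qed
  have A1: "AE x in M. \<forall>j. 0 \<le> v j x \<and> v j x \<le> v (Suc j) x"
    using AE_space hAll
  proof eventually_elim
    case (elim x)
    show ?case
    proof (intro allI conjI)
      fix j
      show "0 \<le> v j x" by (simp add: v_def)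
      have "F (\<bar>h j x\<bar> / l) \<le> F (\<bar>h (Suc j) x\<bar> / l)"
        using hmono[OF elim(1), of j] l0 by (auto intro!: F_mono[OF ri orl] divide_right_mono)
      then show "v j x \<le> v (Suc j) x" unfolding v_def
        using elim(2) by (intro enn2real_mono) (auto simp: less_top)
    qed
  qed
  have A2: "AE x in M. (\<lambda>j. v j x) \<longlonglongrightarrow> f x"
    using AE_space
  proof eventually_elim
    case (elim x)
    show ?case unfolding v_def f_def
      by (rule tendsto_eventually) (use ev[OF elim] in \<open>auto elim: eventually_mono\<close>)
  qed
  have sup: "(SUP j. \<rho> (v j)) < \<infinity>"
  proof -
    have "(SUP j. \<rho> (v j)) \<le> 1" using hle hv by (auto intro!: SUP_least)
    then show ?thesis by (simp add: le_less_trans)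
  qed
  have lim: "(\<lambda>j. \<rho> (v j)) \<longlonglongrightarrow> \<rho> f"
    using fat fm vm A1 A2 sup unfolding fatou_property_def by blast
  have "\<rho> f \<le> 1"
    by (rule tendsto_upperbound[OF lim]) (use hle hv in \<open>auto intro!: always_eventually\<close>)
  moreover have "modu M \<rho> F g l = \<rho> f"
    using gA by (simp add: modu_def ennfun_norm_def f_def)
  ultimately have "modu M \<rho> F g l \<noteq> \<infinity>" by (auto simp: top_unique)
  then show False using split_step[OF l, of J] by (simp add: g_def)
qed

lemma key: "lattice_iso_linfty M (CL_norm M \<rho> F)"
proof -
  define L where "L = (\<lambda>j::nat. 1 - 1 / (real j + 2))"
  have L13: "1/3 < L j" and L1: "L j < 1" and L0: "0 < L j" for j
    by (auto simp: L_def field_simps)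
  have Lmono: "L i \<le> L j" if "i \<le> j" for i j
    using that by (auto simp: L_def intro!: divide_left_mono)
  have "\<forall>j J. \<exists>J'. J < J' \<and> 1 < modu M \<rho> F (\<lambda>x. if x \<in> E J - E J' then w x else 0) (L j)"
    using fatou_step L13 L1 by blast
  then obtain \<phi> where \<phi>: "\<And>j J. J < \<phi> j J \<and> 1 < modu M \<rho> F (\<lambda>x. if x \<in> E J - E (\<phi> j J) then w x else 0) (L j)"
    by metis
  define nn where "nn = rec_nat 0 \<phi>"
  have nn0: "nn 0 = 0" and nnS: "nn (Suc j) = \<phi> j (nn j)" for j by (simp_all add: nn_def)
  define P where "P j = E (nn j) - E (nn (Suc j))" for j
  have Pmod: "1 < modu M \<rho> F (\<lambda>x. if x \<in> P j then w x else 0) (L j)" for j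
    using \<phi>[where j=j and J="nn j"] by (simp add: P_def nnS)
  have smono: "strict_mono nn"
    unfolding strict_mono_Suc_iff using \<phi> by (simp add: nnS)
  have Pdisj: "i = j" if "x \<in> P i" "x \<in> P j" for x i j
  proof (rule ccontr)
    have *: False if "x \<in> P i" "x \<in> P j" "i < j" for i j
    proof -
      have "nn (Suc i) \<le> nn j" using smono that(3) by (simp add: strict_mono_less_eq)
      then have "E (nn j) \<subseteq> E (nn (Suc i))" by (rule E_dec)
      then show False using that by (auto simp: P_def)
    qed
    assume "i \<noteq> j"
    then show False using *[of i j] *[of j i] that by (cases "i < j") auto
  qed
  have Psets[measurable]: "P j \<in> sets M" for j unfolding P_def using E_sets by auto
  have Pspace: "P j \<subseteq> space M" for j unfolding P_def using E_space by auto
  define idx where "idx x = (LEAST j. x \<in> P j)" for x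
  have idx: "idx x = j" if "x \<in> P j" for x j
    unfolding idx_def by (rule Least_equality) (use that Pdisj in auto)
  have idxm: "idx \<in> measurable M (count_space UNIV)"
    unfolding idx_def by measurable
  define U where "U = (\<Union>j. P j)"
  have Usets: "U \<in> sets M" unfolding U_def by auto
  have Uspace: "x \<in> U \<Longrightarrow> x \<in> space M" for x using Pspace by (auto simp: U_def)
  define T where "T a x = (if x \<in> U then a (fst (prod_decode (idx x))) * w x else 0)"
    for a :: "nat \<Rightarrow> real" and x
  have Tm: "T a \<in> borel_measurable M" for a
  proof -
    have "(\<lambda>x. a (fst (prod_decode (idx x)))) \<in> borel_measurable M"
      by (rule measurable_compose[OF idxm]) simp
    then show ?thesis unfolding T_def
      by (intro If_meas[OF Usets] borel_measurable_times) auto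
  qed
  have TP: "T a x = a (fst (prod_decode j)) * w x" if "x \<in> P j" for a x j
    using that idx[OF that] by (auto simp: T_def U_def)
  have TU: "T a x = 0" if "x \<notin> U" for a x
    using that by (simp add: T_def)
  have norm: "CL_norm M \<rho> F (T a) = ennreal (SUP n. \<bar>a n\<bar>)" if bnd: "bounded (range a)" for a
  proof -
    define s where "s = (SUP n. \<bar>a n\<bar>)"
    have bdd: "bdd_above (range (\<lambda>n. \<bar>a n\<bar>))"
    proof -
      obtain B where "\<forall>x\<in>range a. norm x \<le> B" using bnd unfolding bounded_iff by blast
      then show ?thesis by (auto simp: bdd_above_def)
    qed
    have ak: "\<bar>a k\<bar> \<le> s" for k unfolding s_def by (rule cSUP_upper[OF _ bdd]) simp
    have s0: "0 \<le> s" using ak[of 0] by simp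
    have Tle: "\<bar>T a x\<bar> \<le> s * w x" if x: "x \<in> space M" for x
    proof (cases "x \<in> U")
      case True
      then obtain j where "x \<in> P j" by (auto simp: U_def)
      then show ?thesis using TP[of x j a] ak w_nn[OF x]
        by (simp add: abs_mult mult_right_mono)
    qed (use TU s0 w_nn[OF x] in auto)
    have up: "CL_norm M \<rho> F (T a) \<le> ennreal s"
    proof (rule CL_le[OF ri orl s0])
      fix l assume l: "s < l"
      show "modu M \<rho> F (T a) l \<le> 1"
      proof (cases "s = 0")
        case True
        have "modu M \<rho> F (T a) l \<le> modu M \<rho> F (\<lambda>x. 0) 1"
          by (rule modu_mono[OF ri orl Tm]) (use l True Tle in auto)
        then show ?thesis by (simp add: modu_zero[OF ri orl])
      next
        case False
        then have sp: "0 < s" using s0 by simp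
        have "modu M \<rho> F (T a) l \<le> modu M \<rho> F w (l / s)"
        proof (rule modu_mono[OF ri orl Tm wm])
          show "0 < l" "0 < l / s" using l sp by auto
          fix x assume x: "x \<in> space M"
          have "\<bar>T a x\<bar> / l \<le> s * w x / l" using Tle[OF x] l sp by (auto intro!: divide_right_mono)
          also have "\<dots> = \<bar>w x\<bar> / (l / s)" using w_nn[OF x] sp by simp
          finally show "\<bar>T a x\<bar> / l \<le> \<bar>w x\<bar> / (l / s)" .
        qed
        also have "\<dots> \<le> 1" by (rule CL_le_modu[OF ri orl wm Nw]) (use l sp in auto)
        finally show ?thesis .
      qed
    qed
    have low: "ennreal s \<le> CL_norm M \<rho> F (T a)"
    proof (rule CL_ge[OF ri orl])
      fix l assume l: "0 < l" "l < s"
      then obtain k where k: "l < \<bar>a k\<bar>" unfolding s_def using less_cSUP_iff[OF _ bdd] by auto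
      define r where "r = l / \<bar>a k\<bar>"
      have r: "0 < r" "r < 1" using k l by (auto simp: r_def)
      obtain i :: nat where i: "1 / (1 - r) < real i" using reals_Archimedean2 by blast
      have "r \<le> L i"
      proof -
        have "1 / (real i + 2) \<le> 1 - r"
          using i r by (auto simp: field_simps)
        then show ?thesis by (simp add: L_def)
      qed
      define j where "j = prod_encode (k, i)"
      have rj: "r \<le> L j" using Lmono[of i j] le_prod_encode_2[of i k] \<open>r \<le> L i\<close> by (simp add: j_def)
      have kj: "fst (prod_decode j) = k" by (simp add: j_def)
      have "1 < modu M \<rho> F (\<lambda>x. if x \<in> P j then w x else 0) (L j)" by (rule Pmod)
      also have "\<dots> \<le> modu M \<rho> F (T a) l"
      proof (rule modu_mono[OF ri orl _ Tm L0 l(1)])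
        show "(\<lambda>x. if x \<in> P j then w x else 0) \<in> borel_measurable M" by measurable
        fix x assume x: "x \<in> space M"
        show "\<bar>if x \<in> P j then w x else 0\<bar> / L j \<le> \<bar>T a x\<bar> / l"
        proof (cases "x \<in> P j")
          case True
          have Tx: "\<bar>T a x\<bar> = \<bar>a k\<bar> * w x" using TP[OF True, of a] kj w_nn[OF x] by (simp add: abs_mult)
          have "l \<le> \<bar>a k\<bar> * L j" using rj k l by (simp add: r_def field_simps)
          then have "w x * l \<le> \<bar>a k\<bar> * w x * L j" using w_nn[OF x]
            by (metis mult.assoc mult.commute mult_left_mono)
          then show ?thesis using True Tx w_nn[OF x] l L0[of j]
            by (simp add: divide_le_eq le_divide_eq field_simps)
        qed (use l in simp)
      qed
      finally show "1 < modu M \<rho> F (T a) l" .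
    qed
    show ?thesis using up low unfolding s_def by simp
  qed
  show ?thesis
    unfolding lattice_iso_linfty_def
  proof (intro exI[of _ T] conjI allI impI)
    fix a :: "nat \<Rightarrow> real" assume "bounded (range a)"
    then show "T a \<in> borel_measurable M" "CL_norm M \<rho> F (T a) = ennreal (SUP n. \<bar>a n\<bar>)"
      using Tm norm by auto
  next
    fix a b :: "nat \<Rightarrow> real"
    show "AE x in M. T (\<lambda>n. a n + b n) x = T a x + T b x"
      by (rule AE_I2) (simp add: T_def distrib_right)
    show "AE x in M. T (\<lambda>n. max (a n) (b n)) x = max (T a x) (T b x)"
    proof (rule AE_I2)
      fix x assume x: "x \<in> space M"
      show "T (\<lambda>n. max (a n) (b n)) x = max (T a x) (T b x)"
        using w_nn[OF x] by (simp add: T_def max_mult_distrib_right)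
    qed
  next
    fix a :: "nat \<Rightarrow> real" and c :: real
    show "AE x in M. T (\<lambda>n. c * a n) x = c * T a x"
      by (rule AE_I2) (simp add: T_def)
  qed
qed

end

lemma bounded_range_abs: "(\<And>n. \<bar>a n\<bar> \<le> B) \<Longrightarrow> bounded (range (a :: nat \<Rightarrow> real))"
  unfolding bounded_iff by auto

context
  fixes M :: "'a measure" and \<rho> :: "('a \<Rightarrow> real) \<Rightarrow> ennreal" and F :: "real \<Rightarrow> ennreal"
    and Ces :: "('a \<Rightarrow> real) \<Rightarrow> 'a \<Rightarrow> ennreal"
  assumes ri: "ri_space M \<rho>" and orl: "orlicz F"
    and oc: "order_continuous M \<rho>" and fat: "fatou_property M \<rho>"
    and P1: "\<And>f g x. f \<in> borel_measurable M \<Longrightarrow> g \<in> borel_measurable M \<Longrightarrow>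
       (AE x in M. \<bar>f x\<bar> \<le> \<bar>g x\<bar>) \<Longrightarrow> x \<in> space M \<Longrightarrow> Ces f x \<le> Ces g x"
    and P2: "\<And>f. f \<in> borel_measurable M \<Longrightarrow> Ces f \<in> borel_measurable M"
    and P3: "\<And>g r x. g \<in> borel_measurable M \<Longrightarrow> (\<And>n. r n \<in> borel_measurable M) \<Longrightarrow>
       (AE x in M. \<forall>n. \<bar>r n x\<bar> \<le> \<bar>g x\<bar>) \<Longrightarrow> (AE x in M. (\<lambda>n. r n x) \<longlonglongrightarrow> 0) \<Longrightarrow>
       x \<in> space M \<Longrightarrow> Ces g x < \<infinity> \<Longrightarrow> (\<lambda>n. Ces (r n) x) \<longlonglongrightarrow> 0"
begin

lemma transfer_main:
  assumes hyp: "lattice_iso_linfty M (cesaro_norm M Ces (CL_norm M \<rho> F))"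
  shows "lattice_iso_linfty M (CL_norm M \<rho> F)"
proof -
  define N where "N = CL_norm M \<rho> F"
  define cn where "cn h = ennfun_norm M N (Ces h)" for h
  obtain T :: "(nat \<Rightarrow> real) \<Rightarrow> 'a \<Rightarrow> real" where TT:
    "(\<forall>a. bounded (range a) \<longrightarrow>
           T a \<in> borel_measurable M \<and> ennfun_norm M (CL_norm M \<rho> F) (Ces (T a)) = ennreal (SUP n. \<bar>a n\<bar>)) \<and>
        (\<forall>a b. bounded (range a) \<longrightarrow> bounded (range b) \<longrightarrow>
           (AE x in M. T (\<lambda>n. a n + b n) x = T a x + T b x)) \<and>
        (\<forall>a c. bounded (range a) \<longrightarrow> (AE x in M. T (\<lambda>n. c * a n) x = c * T a x)) \<and>
        (\<forall>a b. bounded (range a) \<longrightarrow> bounded (range b) \<longrightarrow>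
           (AE x in M. T (\<lambda>n. max (a n) (b n)) x = max (T a x) (T b x)))"
    using hyp unfolding lattice_iso_linfty_def cesaro_norm_def by (elim exE) blast
  have T1: "\<And>a. bounded (range a) \<Longrightarrow> T a \<in> borel_measurable M \<and> cn (T a) = ennreal (SUP n. \<bar>a n\<bar>)"
    using TT unfolding cn_def N_def by blast
  have T2: "\<And>a b. bounded (range a) \<Longrightarrow> bounded (range b) \<Longrightarrow>
           (AE x in M. T (\<lambda>n. a n + b n) x = T a x + T b x)"
    using TT by blast
  have T3: "\<And>a c. bounded (range a) \<Longrightarrow> (AE x in M. T (\<lambda>n. c * a n) x = c * T a x)"
    using TT by blast
  have T4: "\<And>a b. bounded (range a) \<Longrightarrow> bounded (range b) \<Longrightarrow>
           (AE x in M. T (\<lambda>n. max (a n) (b n)) x = max (T a x) (T b x))"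
    using TT by blast
  define e where "e k = (\<lambda>n::nat. if n = k then 1 else (0::real))" for k :: nat
  define one where "one = (\<lambda>n::nat. (1::real))"
  have be: "bounded (range (e k))" for k by (rule bounded_range_abs[of _ 1]) (simp add: e_def)
  have b1: "bounded (range one)" by (rule bounded_range_abs[of _ 1]) (simp add: one_def)
  have b0: "bounded (range (\<lambda>n::nat. 0::real))" by (rule bounded_range_abs[of _ 0]) simp
  have T0: "AE x in M. T (\<lambda>n. 0) x = 0"
    using T3[OF b1, of 0] by simp
  have pos: "AE x in M. 0 \<le> T a x" if ba: "bounded (range a)" and a0: "\<And>n. 0 \<le> a n" for a
  proof -
    have eq: "(\<lambda>n. max (a n) 0) = a" using a0 by (intro ext) (simp add: max_absorb1)
    show ?thesis using T4[OF ba b0] T0 by eventually_elim (simp add: eq)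
  qed
  define f where "f k = T (e k)" for k
  define g where "g = T one"
  have fm[measurable]: "f k \<in> borel_measurable M" for k using T1[OF be] by (simp add: f_def)
  have gm[measurable]: "g \<in> borel_measurable M" using T1[OF b1] by (simp add: g_def)
  have f_nn: "AE x in M. 0 \<le> f k x" for k unfolding f_def by (rule pos[OF be]) (simp add: e_def)
  have f_le: "AE x in M. f k x \<le> g x" for k
  proof -
    have bb: "bounded (range (\<lambda>n. 1 - e k n))" by (rule bounded_range_abs[of _ 1]) (simp add: e_def)
    have "AE x in M. g x = f k x + T (\<lambda>n. 1 - e k n) x"
      using T2[OF be[of k] bb] by (simp add: g_def f_def one_def)
    moreover have "AE x in M. 0 \<le> T (\<lambda>n. 1 - e k n) x" by (rule pos[OF bb]) (simp add: e_def)
    ultimately show ?thesis by eventually_elim simp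
  qed
  have f_disj: "AE x in M. f j x = 0 \<or> f k x = 0" if jk: "j \<noteq> k" for j k
  proof -
    have eq: "(\<lambda>n. max (e j n) (e k n)) = (\<lambda>n. e j n + e k n)" using jk by (auto simp: e_def)
    have "AE x in M. f j x + f k x = max (f j x) (f k x)"
      using T2[OF be[of j] be[of k]] T4[OF be[of j] be[of k]] by eventually_elim (simp add: f_def eq)
    then show ?thesis using f_nn[of j] f_nn[of k] by eventually_elim (auto simp: max_def split: if_splits)
  qed
  have good: "AE x in M. \<forall>k. 0 \<le> f k x \<and> f k x \<le> g x \<and> (\<forall>j. j \<noteq> k \<longrightarrow> f j x = 0 \<or> f k x = 0)"
  proof -
    have d: "AE x in M. \<forall>j. j \<noteq> k \<longrightarrow> f j x = 0 \<or> f k x = 0" for k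
      unfolding AE_all_countable
    proof
      fix j show "AE x in M. j \<noteq> k \<longrightarrow> f j x = 0 \<or> f k x = 0"
      proof (cases "j = k")
        case False
        show ?thesis using f_disj[OF False] by eventually_elim simp
      qed simp
    qed
    have "AE x in M. 0 \<le> f k x \<and> f k x \<le> g x \<and> (\<forall>j. j \<noteq> k \<longrightarrow> f j x = 0 \<or> f k x = 0)" for k
      using f_nn[of k] f_le[of k] d[of k] by eventually_elim simp
    then show ?thesis unfolding AE_all_countable by blast
  qed
  have SUPe: "(SUP n. \<bar>e k n\<bar>) = 1" for k
  proof (rule antisym)
    show "(SUP n. \<bar>e k n\<bar>) \<le> 1" by (rule cSUP_least) (auto simp: e_def)
    have "\<bar>e k k\<bar> \<le> (SUP n. \<bar>e k n\<bar>)"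
      by (rule cSUP_upper) (auto intro!: bdd_aboveI[of _ 1] simp: e_def)
    then show "1 \<le> (SUP n. \<bar>e k n\<bar>)" by (simp add: e_def)
  qed
  have cnf: "cn (f k) = 1" for k using T1[OF be, of k] SUPe by (simp add: f_def)
  have cng: "cn g = 1" using T1[OF b1] by (simp add: g_def one_def)
  define A where "A n = {x\<in>space M. \<exists>k. n \<le> k \<and> 0 < f k x}" for n
  have Asets[measurable]: "A n \<in> sets M" for n unfolding A_def by measurable
  define r where "r n x = (if x \<in> A n then g x else 0)" for n x
  have rm[measurable]: "r n \<in> borel_measurable M" for n unfolding r_def by measurable
  have r_g: "AE x in M. \<forall>n. \<bar>r n x\<bar> \<le> \<bar>g x\<bar>" by (rule AE_I2) (simp add: r_def)
  have r_lim: "AE x in M. (\<lambda>n. r n x) \<longlonglongrightarrow> 0"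
    using good
  proof eventually_elim
    case (elim x)
    show ?case
    proof (cases "\<exists>k. 0 < f k x")
      case True
      then obtain k0 where k0: "0 < f k0 x" by blast
      have "r n x = 0" if "Suc k0 \<le> n" for n
      proof -
        have "x \<notin> A n"
        proof
          assume "x \<in> A n"
          then obtain k where "n \<le> k" "0 < f k x" by (auto simp: A_def)
          then show False using elim k0 that by (metis less_irrefl not_less_eq_eq order_trans)
        qed
        then show ?thesis by (simp add: r_def)
      qed
      then show ?thesis by (intro tendsto_eventually) (auto simp: eventually_sequentially)
    next
      case False
      then have "r n x = 0" for n by (auto simp: r_def A_def)
      then show ?thesis by simp
    qed
  qed
  have f_r: "AE x in M. \<bar>f n x\<bar> \<le> \<bar>r n x\<bar>" for n
    using AE_space good
  proof eventually_elim
    case (elim x)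
    show ?case
    proof (cases "0 < f n x")
      case True
      then have "x \<in> A n" using elim(1) by (auto simp: A_def)
      then show ?thesis using elim(2) True by (auto simp: r_def intro: order.trans[OF _ abs_ge_self])
    qed (use elim in auto)
  qed
  have r_dec: "AE x in M. \<bar>r (Suc n) x\<bar> \<le> \<bar>r n x\<bar>" for n
    by (rule AE_I2) (auto simp: r_def A_def Suc_le_eq)
  have Cm[measurable]: "Ces h \<in> borel_measurable M" if "h \<in> borel_measurable M" for h using P2 that .
  have cn_fin: "AE x in M. Ces g x \<noteq> \<infinity>" and Wn: "N (\<lambda>x. enn2real (Ces g x)) = 1"
    using cng by (auto simp: cn_def ennfun_norm_def split: if_splits)
  define W where "W x = enn2real (Ces g x)" for x
  define U where "U n x = (if Ces g x = \<infinity> then 0 else enn2real (Ces (r n) x))" for n x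
  have Wm: "W \<in> borel_measurable M" unfolding W_def by measurable
  have Um: "U n \<in> borel_measurable M" for n unfolding U_def by measurable
  have Cr_g: "Ces (r n) x \<le> Ces g x" if "x \<in> space M" for n x
    by (rule P1[OF rm gm _ that]) (use r_g in \<open>auto elim: AE_mp\<close>)
  have lattice: "lattice_iso_linfty M (CL_norm M \<rho> F)"
  proof (rule key[OF ri orl oc fat Wm Um])
    fix n x assume x: "x \<in> space M"
    show "0 \<le> U n x" by (simp add: U_def)
    show "U n x \<le> W x"
      using Cr_g[OF x, of n] by (auto simp: U_def W_def intro!: enn2real_mono simp: less_top)
    have "Ces (r (Suc n)) x \<le> Ces (r n) x" by (rule P1[OF rm rm r_dec x])
    then show "U (Suc n) x \<le> U n x"
      using Cr_g[OF x, of n] by (auto simp: U_def intro!: enn2real_mono simp: less_top top_unique)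
  next
    fix x assume x: "x \<in> space M"
    show "(\<lambda>n. U n x) \<longlonglongrightarrow> 0"
    proof (cases "Ces g x = \<infinity>")
      case False
      then have "(\<lambda>n. Ces (r n) x) \<longlonglongrightarrow> ennreal 0"
        using P3[OF gm rm r_g r_lim x] by (simp add: less_top)
      then have "(\<lambda>n. enn2real (Ces (r n) x)) \<longlonglongrightarrow> 0" by (rule tendsto_enn2real) simp
      then show ?thesis using False by (simp add: U_def)
    qed (simp add: U_def)
  next
    have "W = (\<lambda>x. enn2real (Ces g x))" by (simp add: W_def fun_eq_iff)
    then show "CL_norm M \<rho> F W \<le> 1" using Wn by (simp add: N_def)
  next
    fix n
    have fin_r: "AE x in M. Ces (r n) x \<noteq> \<infinity>"
      using AE_space cn_fin by eventually_elim (metis Cr_g neq_top_trans infinity_ennreal_def)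
    have "1 = cn (f n)" using cnf by simp
    also have "\<dots> \<le> cn (r n)"
      unfolding cn_def
    proof (rule ennfun_mono_gen)
      show "\<And>f g. f \<in> borel_measurable M \<Longrightarrow> g \<in> borel_measurable M \<Longrightarrow>
        (AE x in M. \<bar>f x\<bar> \<le> \<bar>g x\<bar>) \<Longrightarrow> N f \<le> N g"
        unfolding N_def by (rule CL_mono[OF ri orl])
      show "AE x in M. Ces (f n) x \<le> Ces (r n) x"
        by (rule AE_I2) (rule P1[OF fm rm f_r])
    qed auto
    also have "cn (r n) = N (\<lambda>x. enn2real (Ces (r n) x))"
      using fin_r by (simp add: cn_def ennfun_norm_def)
    also have "\<dots> = N (U n)"
      unfolding N_def
      by (rule CL_cong[OF ri orl]) (use Um cn_fin in \<open>auto simp: U_def elim: AE_mp\<close>)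
    finally show "1 \<le> CL_norm M \<rho> F (U n)" by (simp add: N_def)
  qed
  then show ?thesis .
qed

end

lemma seq_case:
  fixes \<rho> :: "(nat \<Rightarrow> real) \<Rightarrow> ennreal"
  assumes ri: "ri_space (count_space UNIV) \<rho>" and orl: "orlicz F"
    and oc: "order_continuous (count_space UNIV) \<rho>" and fat: "fatou_property (count_space UNIV) \<rho>"
    and hyp: "lattice_iso_linfty (count_space UNIV) (cesaro_norm (count_space UNIV) cesaro_seq (CL_norm (count_space UNIV) \<rho> F))"
  shows "lattice_iso_linfty (count_space UNIV) (CL_norm (count_space UNIV) \<rho> F)"
proof (rule transfer_main[OF ri orl oc fat _ _ _ hyp])
  fix f g :: "nat \<Rightarrow> real" and x :: nat
  assume "AE x in count_space UNIV. \<bar>f x\<bar> \<le> \<bar>g x\<bar>"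
  then have fg: "\<And>k. \<bar>f k\<bar> \<le> \<bar>g k\<bar>" by (simp add: AE_count_space)
  show "cesaro_seq f x \<le> cesaro_seq g x"
    unfolding cesaro_seq_def
    by (intro ennreal_leI divide_right_mono sum_mono fg) simp
next
  fix f :: "nat \<Rightarrow> real"
  show "cesaro_seq f \<in> borel_measurable (count_space UNIV)" by simp
next
  fix g :: "nat \<Rightarrow> real" and r :: "nat \<Rightarrow> nat \<Rightarrow> real" and x :: nat
  assume "AE x in count_space UNIV. (\<lambda>n. r n x) \<longlonglongrightarrow> 0"
  then have lim: "\<And>k. (\<lambda>n. r n k) \<longlonglongrightarrow> 0" by (simp add: AE_count_space)
  have "(\<lambda>n. (\<Sum>k\<le>x. \<bar>r n k\<bar>) / real (Suc x)) \<longlonglongrightarrow> (\<Sum>k\<le>x. \<bar>0\<bar>) / real (Suc x)"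
    by (intro tendsto_intros lim) simp
  then have "(\<lambda>n. ennreal ((\<Sum>k\<le>x. \<bar>r n k\<bar>) / real (Suc x))) \<longlonglongrightarrow> ennreal 0"
    by (intro tendsto_ennrealI) simp
  then show "(\<lambda>n. cesaro_seq (r n) x) \<longlonglongrightarrow> 0" by (simp add: cesaro_seq_def)
qed

context
  fixes S :: "real set"
  assumes S: "S \<in> sets lebesgue" and Spos: "S \<subseteq> {0<..}" and Sint: "\<And>x. x \<in> S \<Longrightarrow> {0<..x} \<subseteq> S"
begin

lemma space_RS: "space (restrict_space lebesgue S) = S"
  by (simp add: space_restrict_space)

lemma AE_RS: "(AE x in restrict_space lebesgue S. P x) \<longleftrightarrow> (AE x in lebesgue. x \<in> S \<longrightarrow> P x)"
  by (rule AE_restrict_space_iff) (use S in simp)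

lemma P1f:
  assumes "AE x in restrict_space lebesgue S. \<bar>f x\<bar> \<le> \<bar>g x\<bar>" and x: "x \<in> space (restrict_space lebesgue S)"
  shows "cesaro_fun f x \<le> cesaro_fun g x"
proof -
  have xS: "x \<in> S" using x by (simp add: space_RS)
  have "AE t in lebesgue. t \<in> S \<longrightarrow> \<bar>f t\<bar> \<le> \<bar>g t\<bar>" using assms(1) by (simp add: AE_RS)
  then have "AE t in lebesgue. ennreal \<bar>f t\<bar> * indicator {0<..x} t \<le> ennreal \<bar>g t\<bar> * indicator {0<..x} t"
  proof eventually_elim
    case (elim t)
    then show ?case using Sint[OF xS] by (cases "t \<in> {0<..x}") (auto intro: ennreal_leI)
  qed
  then have "(\<integral>\<^sup>+ t. ennreal \<bar>f t\<bar> * indicator {0<..x} t \<partial>lebesgue) \<le> (\<integral>\<^sup>+ t. ennreal \<bar>g t\<bar> * indicator {0<..x} t \<partial>lebesgue)"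
    by (rule nn_integral_mono_AE)
  then show ?thesis unfolding cesaro_fun_def by (rule divide_right_mono_ennreal)
qed

lemma P2f: "cesaro_fun f \<in> borel_measurable (restrict_space lebesgue S)"
proof -
  define I where "I x = (\<integral>\<^sup>+ t. ennreal \<bar>f t\<bar> * indicator {0<..x} t \<partial>lebesgue)" for x
  have Imono: "I s \<le> I t" if "s \<le> t" for s t
    unfolding I_def using that by (intro nn_integral_mono) (auto intro!: mult_left_mono simp: indicator_def)
  have id: "(\<lambda>x::real. x) \<in> borel_measurable (restrict_space lebesgue S)"
    by (rule measurable_restrict_space1) (use id_borel_measurable_lebesgue in \<open>simp add: id_def\<close>)
  have Im: "(\<lambda>x. I x) \<in> borel_measurable (restrict_space lebesgue S)"
    by (rule mono_comp_measurable[OF Imono id]) (use Spos in \<open>auto simp: space_RS\<close>)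
  have "(\<lambda>x. I x / ennreal x) \<in> borel_measurable (restrict_space lebesgue S)"
    using Im id by measurable
  then show ?thesis by (simp add: cesaro_fun_def[abs_def] I_def)
qed

lemma restr_meas:
  assumes r: "r \<in> borel_measurable (restrict_space lebesgue S)" and xS: "x \<in> S"
  shows "(\<lambda>t. ennreal \<bar>r t\<bar> * indicator {0<..x} t) \<in> borel_measurable lebesgue"
proof -
  have "(\<lambda>t. if t \<in> S then r t else 0) \<in> borel_measurable lebesgue"
    using r by (subst (asm) measurable_restrict_space_iff) (use S in auto)
  moreover have "{0<..x} \<in> sets lebesgue" by (rule sets_completionI_sets) simp
  ultimately have "(\<lambda>t. ennreal \<bar>if t \<in> S then r t else 0\<bar> * indicator {0<..x} t) \<in> borel_measurable lebesgue"
    by measurable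
  also have "(\<lambda>t. ennreal \<bar>if t \<in> S then r t else 0\<bar> * indicator {0<..x} t) = (\<lambda>t. ennreal \<bar>r t\<bar> * indicator {0<..x} t)"
    using Sint[OF xS] by (auto simp: indicator_def fun_eq_iff)
  finally show ?thesis .
qed

lemma P3f:
  assumes gm: "g \<in> borel_measurable (restrict_space lebesgue S)"
    and rm: "\<And>n. r n \<in> borel_measurable (restrict_space lebesgue S)"
    and rg: "AE x in restrict_space lebesgue S. \<forall>n. \<bar>r n x\<bar> \<le> \<bar>g x\<bar>"
    and rl: "AE x in restrict_space lebesgue S. (\<lambda>n. r n x) \<longlonglongrightarrow> 0"
    and x: "x \<in> space (restrict_space lebesgue S)" and fin: "cesaro_fun g x < \<infinity>"
  shows "(\<lambda>n. cesaro_fun (r n) x) \<longlonglongrightarrow> 0"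
proof -
  have xS: "x \<in> S" using x by (simp add: space_RS)
  have x0: "0 < x" using Spos xS by auto
  have lim: "(\<lambda>n. \<integral>\<^sup>+ t. ennreal \<bar>r n t\<bar> * indicator {0<..x} t \<partial>lebesgue) \<longlonglongrightarrow> (\<integral>\<^sup>+ t. 0 \<partial>(lebesgue :: real measure))"
  proof (rule nn_integral_dominated_convergence[where w="\<lambda>t. ennreal \<bar>g t\<bar> * indicator {0<..x} t"
        and u="\<lambda>n t. ennreal \<bar>r n t\<bar> * indicator {0<..x} t" and u'="\<lambda>t. 0"])
    show "\<And>n. (\<lambda>t. ennreal \<bar>r n t\<bar> * indicator {0<..x} t) \<in> borel_measurable lebesgue"
      by (rule restr_meas[OF rm xS])
    show "(\<lambda>t. ennreal \<bar>g t\<bar> * indicator {0<..x} t) \<in> borel_measurable lebesgue"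
      by (rule restr_meas[OF gm xS])
    show "(\<lambda>t. 0::ennreal) \<in> borel_measurable lebesgue" by simp
    show "AE t in lebesgue. ennreal \<bar>r n t\<bar> * indicator {0<..x} t \<le> ennreal \<bar>g t\<bar> * indicator {0<..x} t" for n
      using rg[unfolded AE_RS]
    proof eventually_elim
      case (elim t)
      then show ?case using Sint[OF xS] by (cases "t \<in> {0<..x}") (auto intro: ennreal_leI)
    qed
    have "(\<integral>\<^sup>+ t. ennreal \<bar>g t\<bar> * indicator {0<..x} t \<partial>lebesgue) \<noteq> \<infinity>"
      using fin x0 by (auto simp: cesaro_fun_def ennreal_top_divide)
    then show "(\<integral>\<^sup>+ t. ennreal \<bar>g t\<bar> * indicator {0<..x} t \<partial>lebesgue) < \<infinity>"
      by (simp add: less_top)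
    show "AE t in lebesgue. (\<lambda>n. ennreal \<bar>r n t\<bar> * indicator {0<..x} t) \<longlonglongrightarrow> 0"
      using rl[unfolded AE_RS]
    proof eventually_elim
      case (elim t)
      show ?case
      proof (cases "t \<in> {0<..x}")
        case True
        then have "t \<in> S" using Sint[OF xS] by auto
        then have "(\<lambda>n. r n t) \<longlonglongrightarrow> 0" using elim by simp
        then have "(\<lambda>n. ennreal \<bar>r n t\<bar>) \<longlonglongrightarrow> ennreal \<bar>0\<bar>"
          by (intro tendsto_ennrealI tendsto_intros)
        then show ?thesis using True by simp
      qed simp
    qed
  qed
  then have lim0: "(\<lambda>n. \<integral>\<^sup>+ t. ennreal \<bar>r n t\<bar> * indicator {0<..x} t \<partial>lebesgue) \<longlonglongrightarrow> 0" by simp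
  have inv: "inverse (ennreal x) < top" using x0 by (simp add: ennreal_inverse_positive less_top[symmetric])
  have "(\<lambda>n. inverse (ennreal x) * (\<integral>\<^sup>+ t. ennreal \<bar>r n t\<bar> * indicator {0<..x} t \<partial>lebesgue)) \<longlonglongrightarrow> inverse (ennreal x) * 0"
    by (rule ennreal_tendsto_cmult[OF inv lim0])
  then show ?thesis by (simp add: cesaro_fun_def divide_ennreal_def mult.commute)
qed

lemma fun_case:
  assumes ri: "ri_space (restrict_space lebesgue S) \<rho>" and orl: "orlicz F"
    and oc: "order_continuous (restrict_space lebesgue S) \<rho>" and fat: "fatou_property (restrict_space lebesgue S) \<rho>"
    and hyp: "lattice_iso_linfty (restrict_space lebesgue S) (cesaro_norm (restrict_space lebesgue S) cesaro_fun (CL_norm (restrict_space lebesgue S) \<rho> F))"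
  shows "lattice_iso_linfty (restrict_space lebesgue S) (CL_norm (restrict_space lebesgue S) \<rho> F)"
  by (rule transfer_main[OF ri orl oc fat P1f P2f P3f hyp])

end

theorem theorem4p5:
  shows
   "(\<forall>M \<in> {restrict_space lebesgue {0<..<1::real}, restrict_space lebesgue {0::real<..}}.
      \<forall>\<rho> F. ri_space M \<rho> \<and> order_continuous M \<rho> \<and> fatou_property M \<rho> \<and> orlicz F \<and>
        cesaro_bounded M cesaro_fun (CL_norm M \<rho> F) \<and>
        lattice_iso_linfty M (cesaro_norm M cesaro_fun (CL_norm M \<rho> F))
        \<longrightarrow> lattice_iso_linfty M (CL_norm M \<rho> F)) \<and>
    (\<forall>\<rho> F. ri_space (count_space UNIV) \<rho> \<and> order_continuous (count_space UNIV) \<rho> \<and>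
        fatou_property (count_space UNIV) \<rho> \<and> orlicz F \<and>
        cesaro_bounded (count_space UNIV) cesaro_seq (CL_norm (count_space UNIV) \<rho> F) \<and>
        lattice_iso_linfty (count_space UNIV)
          (cesaro_norm (count_space UNIV) cesaro_seq (CL_norm (count_space UNIV) \<rho> F))
        \<longrightarrow> lattice_iso_linfty (count_space UNIV) (CL_norm (count_space UNIV) \<rho> F))"
proof (intro conjI ballI allI impI)
  fix M :: "real measure" and \<rho> F
  assume M: "M \<in> {restrict_space lebesgue {0<..<1::real}, restrict_space lebesgue {0::real<..}}"
    and H: "ri_space M \<rho> \<and> order_continuous M \<rho> \<and> fatou_property M \<rho> \<and> orlicz F \<and>
        cesaro_bounded M cesaro_fun (CL_norm M \<rho> F) \<and>
        lattice_iso_linfty M (cesaro_norm M cesaro_fun (CL_norm M \<rho> F))"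
  from M show "lattice_iso_linfty M (CL_norm M \<rho> F)"
  proof (elim insertE emptyE)
    assume Meq: "M = restrict_space lebesgue {0<..<1::real}"
    have S: "{0<..<1::real} \<in> sets lebesgue" by (rule sets_completionI_sets) simp
    show ?thesis unfolding Meq
      by (rule fun_case[OF S]) (use H in \<open>auto simp: Meq\<close>)
  next
    assume Meq: "M = restrict_space lebesgue {0::real<..}"
    have S: "{0::real<..} \<in> sets lebesgue" by (rule sets_completionI_sets) simp
    show ?thesis unfolding Meq
      by (rule fun_case[OF S]) (use H in \<open>auto simp: Meq\<close>)
  qed
next
  fix \<rho> :: "(nat \<Rightarrow> real) \<Rightarrow> ennreal" and F
  assume H: "ri_space (count_space UNIV) \<rho> \<and> order_continuous (count_space UNIV) \<rho> \<and>
        fatou_property (count_space UNIV) \<rho> \<and> orlicz F \<and>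
        cesaro_bounded (count_space UNIV) cesaro_seq (CL_norm (count_space UNIV) \<rho> F) \<and>
        lattice_iso_linfty (count_space UNIV)
          (cesaro_norm (count_space UNIV) cesaro_seq (CL_norm (count_space UNIV) \<rho> F))"
  then show "lattice_iso_linfty (count_space UNIV) (CL_norm (count_space UNIV) \<rho> F)"
    by (intro seq_case) auto
qed

end
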